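(* Let $k\ge 2$. Every undirected graph $G$ whose acyclic chromatic number is at most $k$ satisfies $\chi_p(G)\le k\cdot 2^{k-2}$.
   Context: An acyclic $k$-coloring of an undirected simple graph is a proper vertex coloring with $k$ colors such that the subgraph induced by any two color classes is a forest; the acyclic chromatic number is the least such $k$. An oriented graph is a directed graph with no loops and no pair of opposite arcs; an orientation of $G$ is obtained by orienting each edge. A homomorphism of oriented graphs $\vec G\to\vec H$ is a vertex map sending every arc $uv$ to an arc $\varphi(u)\varphi(v)$. To push a vertex means to reverse all arcs incident with it; the push graph $[\vec G]$ is the set of oriented graphs obtainable from $\vec G$ by pushing some set of vertices (its presentations). $[\vec G]$ admits a homomorphism to $\vec H$ if some presentation does. The push chromatic number $\chi_p([\vec G])$ is the minimum number of vertices of an oriented graph $\vec H$ with $[\vec G]\to\vec H$, and $\chi_p(G)$ is the maximum of $\chi_p([\vec G])$ over all orientations $\vec G$ of $G$. *)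

theory Defs
  imports Main
begin

definition simple_graph :: "'a set \<Rightarrow> ('a \<times> 'a) set \<Rightarrow> bool" where
  "simple_graph V E \<longleftrightarrow> finite V \<and> E \<subseteq> V \<times> V \<and> sym E \<and> irrefl E"

definition is_cycle :: "('a \<times> 'a) set \<Rightarrow> 'a list \<Rightarrow> bool" where
  "is_cycle E xs \<longleftrightarrow> length xs \<ge> 3 \<and> distinct xs \<and>
     (\<forall>i < length xs. (xs ! i, xs ! ((i + 1) mod length xs)) \<in> E)"

definition induced_forest :: "('a \<times> 'a) set \<Rightarrow> 'a set \<Rightarrow> bool" where
  "induced_forest E U \<longleftrightarrow> \<not> (\<exists>xs. set xs \<subseteq> U \<and> is_cycle E xs)"

definition acyclic_coloring :: "'a set \<Rightarrow> ('a \<times> 'a) set \<Rightarrow> nat \<Rightarrow> ('a \<Rightarrow> nat) \<Rightarrow> bool" where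
  "acyclic_coloring V E k c \<longleftrightarrow>
     c ` V \<subseteq> {..<k} \<and>
     (\<forall>(u, v) \<in> E. c u \<noteq> c v) \<and>
     (\<forall>i j. induced_forest E {v \<in> V. c v = i \<or> c v = j})"

definition acyclic_chromatic_number :: "'a set \<Rightarrow> ('a \<times> 'a) set \<Rightarrow> nat" where
  "acyclic_chromatic_number V E = (LEAST k. \<exists>c. acyclic_coloring V E k c)"

definition oriented_graph :: "'b set \<Rightarrow> ('b \<times> 'b) set \<Rightarrow> bool" where
  "oriented_graph W B \<longleftrightarrow> B \<subseteq> W \<times> W \<and> (\<forall>(u, v) \<in> B. (v, u) \<notin> B)"

definition orientation :: "('a \<times> 'a) set \<Rightarrow> ('a \<times> 'a) set \<Rightarrow> bool" where
  "orientation E A \<longleftrightarrow> A \<subseteq> E \<and> (\<forall>(u, v) \<in> E. (u, v) \<in> A \<or> (v, u) \<in> A) \<and>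
     (\<forall>(u, v) \<in> A. (v, u) \<notin> A)"

text \<open>Pushing the set of vertices S: an arc is reversed iff exactly one endpoint lies in S
  (reversing the arcs at each pushed vertex in turn).\<close>
definition push :: "'a set \<Rightarrow> ('a \<times> 'a) set \<Rightarrow> ('a \<times> 'a) set" where
  "push S A = {(u, v). ((u, v) \<in> A \<and> (u \<in> S \<longleftrightarrow> v \<in> S)) \<or> ((v, u) \<in> A \<and> \<not> (u \<in> S \<longleftrightarrow> v \<in> S))}"

definition oriented_hom :: "'a set \<Rightarrow> ('a \<times> 'a) set \<Rightarrow> 'b set \<Rightarrow> ('b \<times> 'b) set \<Rightarrow> ('a \<Rightarrow> 'b) \<Rightarrow> bool" where
  "oriented_hom V A W B f \<longleftrightarrow> f ` V \<subseteq> W \<and> (\<forall>(u, v) \<in> A. (f u, f v) \<in> B)"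

definition push_hom :: "'a set \<Rightarrow> ('a \<times> 'a) set \<Rightarrow> 'b set \<Rightarrow> ('b \<times> 'b) set \<Rightarrow> bool" where
  "push_hom V A W B \<longleftrightarrow> (\<exists>S \<subseteq> V. \<exists>f. oriented_hom V (push S A) W B f)"

text \<open>Push chromatic number of a push graph; target oriented graphs are taken on natural-number
  vertices (every finite oriented graph is isomorphic to one of these).\<close>
definition push_chromatic_number_or :: "'a set \<Rightarrow> ('a \<times> 'a) set \<Rightarrow> nat" where
  "push_chromatic_number_or V A =
     (LEAST n. \<exists>(W :: nat set) B. finite W \<and> card W = n \<and> oriented_graph W B \<and> push_hom V A W B)"

definition push_chromatic_number :: "'a set \<Rightarrow> ('a \<times> 'a) set \<Rightarrow> nat" where
  "push_chromatic_number V E = Max {push_chromatic_number_or V A | A. orientation E A}"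

end

theory Submission
  imports Defs
begin


definition gpath :: "('a \<times> 'a) set \<Rightarrow> 'a list \<Rightarrow> bool" where
  "gpath E xs \<longleftrightarrow> (\<forall>i. Suc i < length xs \<longrightarrow> (xs ! i, xs ! Suc i) \<in> E)"

lemma gpath_Cons:
  assumes "gpath E xs" "xs \<noteq> []" "(w, hd xs) \<in> E"
  shows "gpath E (w # xs)"
  unfolding gpath_def
proof (intro allI impI)
  fix i assume "Suc i < length (w # xs)"
  then show "((w # xs) ! i, (w # xs) ! Suc i) \<in> E"
    using assms by (cases i) (auto simp: gpath_def hd_conv_nth)
qed

lemma cycle_from_path:
  assumes "gpath E xs" "distinct xs" "p < length xs" "2 \<le> p" "(xs ! p, xs ! 0) \<in> E"
  shows "is_cycle E (take (Suc p) xs)"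
  unfolding is_cycle_def
proof (intro conjI allI impI)
  show "3 \<le> length (take (Suc p) xs)" using assms by simp
  show "distinct (take (Suc p) xs)" using assms by simp
  fix i assume i: "i < length (take (Suc p) xs)"
  then have ip: "i \<le> p" using assms by simp
  show "(take (Suc p) xs ! i, take (Suc p) xs ! ((i + 1) mod length (take (Suc p) xs))) \<in> E"
  proof (cases "i = p")
    case True
    then show ?thesis using assms by simp
  next
    case False
    then have "i < p" using ip by simp
    then show ?thesis using assms unfolding gpath_def by simp
  qed
qed

lemma path_extend:
  assumes "sym E" "irrefl E" "induced_forest E U" "xs \<noteq> []" "distinct xs" "set xs \<subseteq> U"
    "gpath E xs" and deg2: "\<forall>v\<in>U. \<exists>a\<in>U. \<exists>b\<in>U. a \<noteq> b \<and> (v, a) \<in> E \<and> (v, b) \<in> E"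
  shows "\<exists>w\<in>U. w \<notin> set xs \<and> (w, hd xs) \<in> E"
proof -
  obtain h rest where xs: "xs = h # rest" using assms(4) by (cases xs) auto
  have hU: "h \<in> U" using xs assms(6) by auto
  obtain a b where ab: "a \<in> U" "b \<in> U" "a \<noteq> b" "(h, a) \<in> E" "(h, b) \<in> E" using deg2 hU by blast
  have irr: "\<And>x. (x, x) \<notin> E" using assms(2) by (auto simp: irrefl_def)
  have sy: "\<And>x y. (x, y) \<in> E \<Longrightarrow> (y, x) \<in> E" using assms(1) by (auto simp: sym_def)
  obtain w where w: "w \<in> U" "(h, w) \<in> E" "rest \<noteq> [] \<longrightarrow> w \<noteq> xs ! 1"
    using ab by (metis)
  have wh: "w \<noteq> h" using w irr by auto
  have "w \<notin> set xs"
  proof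
    assume "w \<in> set xs"
    then obtain p where p: "p < length xs" "xs ! p = w" by (auto simp: in_set_conv_nth)
    have "p \<noteq> 0" using p wh xs by (cases p) auto
    moreover have "p \<noteq> 1" using p w xs by auto
    ultimately have p2: "2 \<le> p" by simp
    have "is_cycle E (take (Suc p) xs)"
      by (rule cycle_from_path) (use assms p p2 w xs sy in auto)
    moreover have "set (take (Suc p) xs) \<subseteq> U" using assms(6) set_take_subset by fastforce
    ultimately show False using assms(3) unfolding induced_forest_def by blast
  qed
  then show ?thesis using w xs sy by auto
qed

lemma leaf_exists:
  assumes "finite U" "U \<noteq> {}" "sym E" "irrefl E" "induced_forest E U"
  shows "\<exists>v\<in>U. \<forall>a\<in>U. \<forall>b\<in>U. (v, a) \<in> E \<longrightarrow> (v, b) \<in> E \<longrightarrow> a = b"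
proof (rule ccontr)
  assume "\<not> ?thesis"
  then have deg2: "\<forall>v\<in>U. \<exists>a\<in>U. \<exists>b\<in>U. a \<noteq> b \<and> (v, a) \<in> E \<and> (v, b) \<in> E" by blast
  have "\<exists>xs. length xs = Suc n \<and> distinct xs \<and> set xs \<subseteq> U \<and> gpath E xs" for n
  proof (induction n)
    case 0
    from assms(2) obtain v where "v \<in> U" by blast
    then show ?case by (intro exI[of _ "[v]"]) (auto simp: gpath_def)
  next
    case (Suc n)
    then obtain xs where xs: "length xs = Suc n" "distinct xs" "set xs \<subseteq> U" "gpath E xs" by blast
    then have ne: "xs \<noteq> []" by auto
    obtain w where w: "w \<in> U" "w \<notin> set xs" "(w, hd xs) \<in> E"
      using path_extend[OF assms(3,4,5) ne xs(2,3,4) deg2] by blast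
    show ?case
      by (intro exI[of _ "w # xs"]) (use xs w ne gpath_Cons in auto)
  qed
  then obtain xs where xs: "length xs = Suc (card U)" "distinct xs" "set xs \<subseteq> U" by blast
  then have "card (set xs) \<le> card U" using assms(1) by (simp add: card_mono)
  then show False using xs distinct_card by fastforce
qed

lemma forest_label:
  assumes "finite U" "sym E" "irrefl E" "induced_forest E U"
    and tsym: "\<forall>u v. (u, v) \<in> E \<longrightarrow> \<tau> u v = \<tau> v u"
  shows "\<exists>x::'a \<Rightarrow> bool. \<forall>u\<in>U. \<forall>v\<in>U. (u, v) \<in> E \<longrightarrow> \<tau> u v = (x u = x v)"
  using assms(1,4)
proof (induction "card U" arbitrary: U rule: less_induct)
  case less
  have irr: "\<And>x. (x, x) \<notin> E" using assms(3) by (auto simp: irrefl_def)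
  have sy: "\<And>x y. (x, y) \<in> E \<Longrightarrow> (y, x) \<in> E" using assms(2) by (auto simp: sym_def)
  show ?case
  proof (cases "U = {}")
    case True then show ?thesis by auto
  next
    case False
    obtain v where v: "v \<in> U" and leaf: "\<forall>a\<in>U. \<forall>b\<in>U. (v, a) \<in> E \<longrightarrow> (v, b) \<in> E \<longrightarrow> a = b"
      using leaf_exists[OF less.prems(1) False assms(2,3) less.prems(2)] by blast
    have f1: "induced_forest E (U - {v})" using less.prems(2) unfolding induced_forest_def by blast
    have c1: "card (U - {v}) < card U" by (rule card_Diff1_less[OF less.prems(1) v])
    have f2: "finite (U - {v})" using less.prems(1) by simp
    obtain x :: "'a \<Rightarrow> bool" where x: "\<forall>u\<in>U-{v}. \<forall>w\<in>U-{v}. (u, w) \<in> E \<longrightarrow> \<tau> u w = (x u = x w)"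
      using less.hyps[OF c1 f2 f1] by blast
    show ?thesis
    proof (cases "\<exists>w\<in>U. (v, w) \<in> E")
      case True
      then obtain w where w: "w \<in> U" "(v, w) \<in> E" by blast
      have wv: "w \<noteq> v" using w(2) irr by auto
      define x' where "x' = x(v := (\<tau> v w = x w))"
      show ?thesis
      proof (intro exI[of _ x'] ballI impI)
        fix a b assume ab: "a \<in> U" "b \<in> U" "(a, b) \<in> E"
        show "\<tau> a b = (x' a = x' b)"
        proof (cases "a = v")
          case True
          then have "b = w" using leaf ab w by blast
          then show ?thesis using True wv unfolding x'_def by auto
        next
          case a: False
          show ?thesis
          proof (cases "b = v")
            case True
            then have "a = w" using leaf ab w sy by blast
            moreover have "\<tau> a b = \<tau> b a" using tsym ab by blast
            ultimately show ?thesis using True wv unfolding x'_def by auto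
          next
            case False
            then show ?thesis using a x ab unfolding x'_def by auto
          qed
        qed
      qed
    next
      case False
      show ?thesis
      proof (intro exI[of _ x] ballI impI)
        fix a b assume ab: "a \<in> U" "b \<in> U" "(a, b) \<in> E"
        then have "a \<noteq> v" "b \<noteq> v" using False sy by blast+
        then show "\<tau> a b = (x a = x b)" using x ab by auto
      qed
    qed
  qed
qed



lemma pcn_or_le:
  assumes "finite (T :: 'b set)" "oriented_graph T B" "push_hom V A T B"
  shows "push_chromatic_number_or V A \<le> card T"
proof -
  obtain h where h: "bij_betw h T {0..<card T}" using ex_bij_betw_finite_nat[OF assms(1)] by blast
  have inj: "inj_on h T" and im: "h ` T = {0..<card T}" using h by (auto simp: bij_betw_def)
  define W where "W = h ` T"
  define B' where "B' = (\<lambda>(a, b). (h a, h b)) ` B"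
  have BT: "B \<subseteq> T \<times> T" and nopp: "\<forall>(u, v) \<in> B. (v, u) \<notin> B"
    using assms(2) by (auto simp: oriented_graph_def)
  have "oriented_graph W B'"
    unfolding oriented_graph_def
  proof (intro conjI)
    show "B' \<subseteq> W \<times> W" using BT unfolding B'_def W_def by auto
    show "\<forall>(u, v)\<in>B'. (v, u) \<notin> B'"
    proof (intro ballI)
      fix p assume "p \<in> B'"
      then obtain a b where ab: "(a, b) \<in> B" and p: "p = (h a, h b)" unfolding B'_def by auto
      have "(h b, h a) \<notin> B'"
      proof
        assume "(h b, h a) \<in> B'"
        then obtain a' b' where ab': "(a', b') \<in> B" and eq: "h b = h a'" "h a = h b'"
          unfolding B'_def by auto
        have "a \<in> T" "b \<in> T" "a' \<in> T" "b' \<in> T" using ab ab' BT by auto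
        then have "a' = b" "b' = a" using eq inj by (auto dest: inj_onD)
        then show False using ab ab' nopp by auto
      qed
      then show "case p of (u, v) \<Rightarrow> (v, u) \<notin> B'" using p by simp
    qed
  qed
  moreover have "push_hom V A W B'"
  proof -
    obtain S f where S: "S \<subseteq> V" and f: "oriented_hom V (push S A) T B f"
      using assms(3) by (auto simp: push_hom_def)
    have "oriented_hom V (push S A) W B' (h \<circ> f)"
      unfolding oriented_hom_def
    proof (intro conjI)
      show "(h \<circ> f) ` V \<subseteq> W" using f unfolding oriented_hom_def W_def by auto
      show "\<forall>(u, v)\<in>push S A. ((h \<circ> f) u, (h \<circ> f) v) \<in> B'"
      proof (intro ballI)
        fix p assume "p \<in> push S A"
        then obtain u v where p: "p = (u, v)" "(u, v) \<in> push S A" by (cases p) auto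
        then have "(f u, f v) \<in> B" using f unfolding oriented_hom_def by blast
        then have "((h \<circ> f) u, (h \<circ> f) v) \<in> B'" unfolding B'_def
          by (rule rev_image_eqI) simp
        then show "case p of (u, v) \<Rightarrow> ((h \<circ> f) u, (h \<circ> f) v) \<in> B'" using p by simp
      qed
    qed
    then show ?thesis using S unfolding push_hom_def by blast
  qed
  moreover have "finite W" "card W = card T" using im unfolding W_def by auto
  ultimately have "\<exists>(W :: nat set) B. finite W \<and> card W = card T \<and> oriented_graph W B \<and> push_hom V A W B"
    by blast
  then show ?thesis unfolding push_chromatic_number_or_def by (rule Least_le)
qed



lemma exists_coloring:
  assumes "simple_graph V E" "acyclic_chromatic_number V E \<le> k"
  shows "\<exists>c. acyclic_coloring V E k c"
proof -
  have fin: "finite V" and irr: "irrefl E" and EV: "E \<subseteq> V \<times> V" using assms(1) by (auto simp: simple_graph_def)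
  obtain h where h: "bij_betw h V {0..<card V}" using ex_bij_betw_finite_nat[OF fin] by blast
  have inj: "inj_on h V" using h by (auto simp: bij_betw_def)
  have "acyclic_coloring V E (card V) h"
    unfolding acyclic_coloring_def
  proof (intro conjI allI)
    show "h ` V \<subseteq> {..<card V}" using h by (auto simp: bij_betw_def)
    show "\<forall>(u, v)\<in>E. h u \<noteq> h v"
    proof (intro ballI)
      fix p assume p: "p \<in> E"
      then obtain u v where uv: "p = (u, v)" by (cases p)
      have "u \<noteq> v" using p uv irr by (auto simp: irrefl_def)
      moreover have "u \<in> V" "v \<in> V" using p uv EV by auto
      ultimately have "h u \<noteq> h v" using inj by (auto dest: inj_onD)
      then show "case p of (u, v) \<Rightarrow> h u \<noteq> h v" using uv by simp
    qed
    fix i j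
    show "induced_forest E {v \<in> V. h v = i \<or> h v = j}"
      unfolding induced_forest_def
    proof
      assume "\<exists>xs. set xs \<subseteq> {v \<in> V. h v = i \<or> h v = j} \<and> is_cycle E xs"
      then obtain xs where xs: "set xs \<subseteq> {v \<in> V. h v = i \<or> h v = j}" "is_cycle E xs" by blast
      have "inj_on h (set xs)" using inj xs(1) by (auto intro: inj_on_subset)
      moreover have "h ` set xs \<subseteq> {i, j}" using xs(1) by auto
      ultimately have "card (set xs) \<le> card {i, j}" by (meson card_inj_on_le finite.emptyI finite.insertI)
      also have "\<dots> \<le> 2" by (simp add: card_insert_le_m1)
      finally have "card (set xs) \<le> 2" .
      moreover have "card (set xs) = length xs" using xs(2) by (simp add: is_cycle_def distinct_card)
      ultimately show False using xs(2) by (simp add: is_cycle_def)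
    qed
  qed
  then have "\<exists>c. acyclic_coloring V E (acyclic_chromatic_number V E) c"
    unfolding acyclic_chromatic_number_def
    using LeastI[of "\<lambda>k. \<exists>c. acyclic_coloring V E k c" "card V"] by blast
  then obtain c where c: "acyclic_coloring V E (acyclic_chromatic_number V E) c" by blast
  then have "acyclic_coloring V E k c" using assms(2) by (auto simp: acyclic_coloring_def)
  then show ?thesis by blast
qed



definition j0 :: "nat \<Rightarrow> nat" where "j0 i = (if i = 0 then 1 else 0)"

definition Tk :: "nat \<Rightarrow> (nat \<times> nat set) set" where
  "Tk k = Sigma {..<k} (\<lambda>i. Pow ({..<k} - {i, j0 i}))"

definition Bk :: "nat \<Rightarrow> ((nat \<times> nat set) \<times> (nat \<times> nat set)) set" where
  "Bk k = {((i, s), (j, t)). (i, s) \<in> Tk k \<and> (j, t) \<in> Tk k \<and> i \<noteq> j \<and> ((i < j) = ((j \<in> s) = (i \<in> t)))}"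

lemma card_Tk:
  assumes "2 \<le> k"
  shows "card (Tk k) = k * 2 ^ (k - 2)"
proof -
  have "card (Pow ({..<k} - {i, j0 i})) = 2 ^ (k - 2)" if i: "i < k" for i
  proof -
    have sub: "{i, j0 i} \<subseteq> {..<k}" using i assms by (auto simp: j0_def)
    have c2: "card {i, j0 i} = 2" by (auto simp: j0_def)
    have "card ({..<k} - {i, j0 i}) = k - 2" using card_Diff_subset[OF _ sub] c2 by simp
    then show ?thesis by (simp add: card_Pow)
  qed
  then have "card (Tk k) = (\<Sum>i<k. 2 ^ (k - 2))" unfolding Tk_def by (simp add: card_SigmaI)
  then show ?thesis by simp
qed

lemma finite_Tk: "finite (Tk k)" unfolding Tk_def by auto

lemma oriented_Tk: "oriented_graph (Tk k) (Bk k)"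
  unfolding oriented_graph_def Bk_def by auto



lemma hom_Tk:
  assumes k: "2 \<le> k" and G: "simple_graph V E" and c: "acyclic_coloring V E k c"
    and A: "orientation E A"
  shows "push_hom V A (Tk k) (Bk k)"
proof -
  have fin: "finite V" and irr: "irrefl E" and sy: "sym E" and EV: "E \<subseteq> V \<times> V"
    using G by (auto simp: simple_graph_def)
  have cV: "\<And>v. v \<in> V \<Longrightarrow> c v < k" using c by (auto simp: acyclic_coloring_def)
  have proper: "\<And>u v. (u, v) \<in> E \<Longrightarrow> c u \<noteq> c v" using c by (auto simp: acyclic_coloring_def)
  have forest: "\<And>i j. induced_forest E {v \<in> V. c v = i \<or> c v = j}"
    using c by (auto simp: acyclic_coloring_def)
  have AE: "A \<subseteq> E" and Aall: "\<And>u v. (u, v) \<in> E \<Longrightarrow> (u, v) \<in> A \<or> (v, u) \<in> A"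
    and Aas: "\<And>u v. (u, v) \<in> A \<Longrightarrow> (v, u) \<notin> A"
    using A unfolding orientation_def by auto
  have syE: "\<And>u v. (u, v) \<in> E \<Longrightarrow> (v, u) \<in> E" using sy by (auto simp: sym_def)
  define \<tau> where "\<tau> u v = (((u, v) \<in> A) = (c u < c v))" for u v
  have tsym: "\<forall>u v. (u, v) \<in> E \<longrightarrow> \<tau> u v = \<tau> v u"
  proof (intro allI impI)
    fix u v assume e: "(u, v) \<in> E"
    have "c u \<noteq> c v" using proper e by blast
    moreover have "((u, v) \<in> A) = ((v, u) \<notin> A)" using Aall[OF e] Aas by blast
    ultimately show "\<tau> u v = \<tau> v u" unfolding \<tau>_def by auto
  qed
  define U where "U i j = {v \<in> V. c v = i \<or> c v = j}" for i j
  have exX: "\<exists>x::'a \<Rightarrow> bool. \<forall>u\<in>U i j. \<forall>v\<in>U i j. (u, v) \<in> E \<longrightarrow> \<tau> u v = (x u = x v)" for i j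
    by (rule forest_label) (use fin sy irr forest tsym in \<open>auto simp: U_def\<close>)
  define X where "X i j = (SOME x::'a \<Rightarrow> bool. \<forall>u\<in>U i j. \<forall>v\<in>U i j. (u, v) \<in> E \<longrightarrow> \<tau> u v = (x u = x v))" for i j
  have X: "\<forall>u\<in>U i j. \<forall>v\<in>U i j. (u, v) \<in> E \<longrightarrow> \<tau> u v = (X i j u = X i j v)" for i j
    unfolding X_def by (rule someI_ex[OF exX])
  define Y where "Y v j = X (min (c v) j) (max (c v) j) v" for v j
  have Yarc: "(c u < c v) = (Y u (c v) = Y v (c u))" if uv: "(u, v) \<in> A" for u v
  proof -
    have e: "(u, v) \<in> E" using uv AE by blast
    then have "u \<in> V" "v \<in> V" using EV by auto
    then have "u \<in> U (min (c u) (c v)) (max (c u) (c v))" "v \<in> U (min (c u) (c v)) (max (c u) (c v))"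
      unfolding U_def by auto
    then have "\<tau> u v = (X (min (c u) (c v)) (max (c u) (c v)) u = X (min (c u) (c v)) (max (c u) (c v)) v)"
      using X[of "min (c u) (c v)" "max (c u) (c v)"] e by blast
    moreover have "\<tau> u v = (c u < c v)" using uv unfolding \<tau>_def by simp
    ultimately have h: "(c u < c v) = (X (min (c u) (c v)) (max (c u) (c v)) u = X (min (c u) (c v)) (max (c u) (c v)) v)"
      by metis
    have m: "min (c v) (c u) = min (c u) (c v)" "max (c v) (c u) = max (c u) (c v)" by auto
    have y1: "Y u (c v) = X (min (c u) (c v)) (max (c u) (c v)) u" unfolding Y_def ..
    have y2: "Y v (c u) = X (min (c u) (c v)) (max (c u) (c v)) v" unfolding Y_def m ..
    show ?thesis unfolding y1 y2 by (rule h)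
  qed
  define S where "S = {v \<in> V. Y v (j0 (c v))}"
  define Z where "Z v j = (Y v j \<noteq> Y v (j0 (c v)))" for v j
  define f where "f v = (c v, {j \<in> {..<k}. j \<noteq> c v \<and> j \<noteq> j0 (c v) \<and> Z v j})" for v
  have fT: "f v \<in> Tk k" if "v \<in> V" for v
    using cV[OF that] unfolding f_def Tk_def by auto
  have mem: "(c v \<in> snd (f u)) = Z u (c v)" if "u \<in> V" "v \<in> V" "c u \<noteq> c v" for u v
    using that cV unfolding f_def Z_def by auto
  have "oriented_hom V (push S A) (Tk k) (Bk k) f"
    unfolding oriented_hom_def
  proof (intro conjI)
    show "f ` V \<subseteq> Tk k" using fT by blast
    show "\<forall>(u, v)\<in>push S A. (f u, f v) \<in> Bk k"
    proof (intro ballI)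
      fix p assume "p \<in> push S A"
      then obtain u v where p: "p = (u, v)" and uv: "(u, v) \<in> push S A" by (cases p) auto
      have disj: "((u, v) \<in> A \<and> (u \<in> S \<longleftrightarrow> v \<in> S)) \<or> ((v, u) \<in> A \<and> \<not> (u \<in> S \<longleftrightarrow> v \<in> S))"
        using uv unfolding push_def by simp
      then have e: "(u, v) \<in> E" using AE syE by blast
      then have V: "u \<in> V" "v \<in> V" using EV by auto
      have ne: "c u \<noteq> c v" using proper e by blast
      have Su: "(u \<in> S) = Y u (j0 (c u))" and Sv: "(v \<in> S) = Y v (j0 (c v))"
        using V unfolding S_def by auto
      have key: "(c u < c v) = (Z u (c v) = Z v (c u))"
        using disj
      proof
        assume a: "(u, v) \<in> A \<and> (u \<in> S \<longleftrightarrow> v \<in> S)"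
        then show ?thesis using Yarc[of u v] Su Sv unfolding Z_def by auto
      next
        assume a: "(v, u) \<in> A \<and> \<not> (u \<in> S \<longleftrightarrow> v \<in> S)"
        then have "(c v < c u) = (Y v (c u) = Y u (c v))" using Yarc[of v u] by blast
        then show ?thesis using a Su Sv ne unfolding Z_def by auto
      qed
      obtain su where su: "f u = (c u, su)" by (simp add: f_def)
      obtain sv where sv: "f v = (c v, sv)" by (simp add: f_def)
      have m1: "(c v \<in> su) = Z u (c v)" using mem[OF V ne] su by simp
      have m2: "(c u \<in> sv) = Z v (c u)" using mem[OF V(2) V(1)] ne sv by simp
      have "((c u, su), (c v, sv)) \<in> Bk k"
        using fT[OF V(1)] fT[OF V(2)] ne key m1 m2 su sv
        unfolding Bk_def by simp
      then have "(f u, f v) \<in> Bk k" using su sv by simp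
      then show "case p of (u, v) \<Rightarrow> (f u, f v) \<in> Bk k" using p by simp
    qed
  qed
  moreover have "S \<subseteq> V" unfolding S_def by blast
  ultimately show ?thesis unfolding push_hom_def by blast
qed


theorem theorem3:
  fixes V :: "'a set" and E :: "('a \<times> 'a) set" and k :: nat
  assumes "k \<ge> 2"
    and "simple_graph V E"
    and "acyclic_chromatic_number V E \<le> k"
  shows "push_chromatic_number V E \<le> k * 2 ^ (k - 2)"
proof -
  have fin: "finite V" and irr: "irrefl E" and EV: "E \<subseteq> V \<times> V" and sy: "sym E"
    using assms(2) by (auto simp: simple_graph_def)
  obtain c where c: "acyclic_coloring V E k c" using exists_coloring[OF assms(2,3)] by blast
  have bound: "push_chromatic_number_or V A \<le> k * 2 ^ (k - 2)" if A: "orientation E A" for A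
  proof -
    have "push_chromatic_number_or V A \<le> card (Tk k)"
      by (rule pcn_or_le[OF finite_Tk oriented_Tk hom_Tk[OF assms(1,2) c A]])
    then show ?thesis using card_Tk[OF assms(1)] by simp
  qed
  have finE: "finite E" using fin EV finite_subset by blast
  have "{A. orientation E A} \<subseteq> Pow E" by (auto simp: orientation_def)
  then have finO: "finite {A. orientation E A}" using finE finite_subset by blast
  have eq: "{push_chromatic_number_or V A | A. orientation E A} = push_chromatic_number_or V ` {A. orientation E A}"
    by blast
  obtain h where h: "bij_betw h V {0..<card V}" using ex_bij_betw_finite_nat[OF fin] by blast
  have inj: "inj_on h V" using h by (auto simp: bij_betw_def)
  define A0 where "A0 = {(u, v). (u, v) \<in> E \<and> h u < h v}"
  have "orientation E A0"
    unfolding orientation_def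
  proof (intro conjI)
    show "A0 \<subseteq> E" unfolding A0_def by auto
    show "\<forall>(u, v)\<in>A0. (v, u) \<notin> A0" unfolding A0_def by auto
    show "\<forall>(u, v)\<in>E. (u, v) \<in> A0 \<or> (v, u) \<in> A0"
    proof (intro ballI)
      fix p assume p: "p \<in> E"
      then obtain u v where uv: "p = (u, v)" by (cases p)
      have e: "(u, v) \<in> E" using p uv by simp
      have "u \<noteq> v" using e irr by (auto simp: irrefl_def)
      moreover have "u \<in> V" "v \<in> V" using e EV by auto
      ultimately have "h u \<noteq> h v" using inj by (auto dest: inj_onD)
      moreover have "(v, u) \<in> E" using e sy by (auto simp: sym_def)
      ultimately have "(u, v) \<in> A0 \<or> (v, u) \<in> A0" using e unfolding A0_def by auto
      then show "case p of (u, v) \<Rightarrow> (u, v) \<in> A0 \<or> (v, u) \<in> A0" using uv by simp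
    qed
  qed
  then have ne: "{A. orientation E A} \<noteq> {}" by blast
  show ?thesis
    unfolding push_chromatic_number_def eq
    by (rule Max.boundedI) (use finO ne bound in auto)
qed

end
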